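(* Let $n>m\ge1$, $T\ge1$, $0<\gamma<1$, $x_0,\dots,x_T\in\mathbb{R}^m$, let $\sigma:\mathbb{R}\to[-1,1]$ be continuously differentiable (applied componentwise), and let $H\in\mathbb{R}^{m\times n}$ be the projection onto the first $m$ coordinates. Fix a policy $\pi_i=(F_i,G_i)$ and let $\Delta\pi=-\nabla_\pi J'_{\pi_i}(\pi)\big|_{\pi=\pi_i}$, where $J'_{\pi_i}(\pi)=c(\mathbf{U}_{\pi_i})+\gamma J^{\pi_i}(S_\pi\mathbf{U}_{\pi_i})$. If $\Delta\pi\neq 0$, then there exists $\alpha_0>0$ such that for all $0<\alpha\le\alpha_0$, $$J^{\pi_i+\alpha\Delta\pi}(\mathbf{U}_{\pi_i})<J^{\pi_i}(\mathbf{U}_{\pi_i}).$$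
   Context: A policy is a pair $\pi=(F,G)$ with $F\in\mathbb{R}^{n\times n}$, $G\in\mathbb{R}^{n\times(m+1)}$, identified with a vector in $\mathbb{R}^{n(n+m+1)}$ (so sums, scalar multiples and gradients with respect to $\pi$ are taken componentwise). A state is a sequence $\mathbf{U}=(u_0,u_1,\dots,u_T)$ with $u_t\in\mathbb{R}^n$. For $x\in\mathbb{R}^m$, $[x;1]\in\mathbb{R}^{m+1}$ is $x$ with a $1$ appended. Define $S_\pi\mathbf{U}=(u'_0,\dots,u'_T)$ by $u'_0=0$ and $u'_{t+1}=\sigma(Fu_t+G[x_t;1])$ for $0\le t<T$. Let $\mathbf{U}_\pi=(u_0,\dots,u_T)$ be the network trajectory $u_0=0$, $u_{t+1}=\sigma(Fu_t+G[x_t;1])$ for $0\le t<T$. The immediate cost is $c(\mathbf{U})=\sum_{t=1}^T\|Hu_t-x_t\|^2$ (Euclidean norm), and the discounted cost of state $\mathbf{U}$ under policy $\pi$ is $J^\pi(\mathbf{U})=\sum_{k=0}^\infty\gamma^k c(S_\pi^k\mathbf{U})$. *)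

theory Defs
  imports "HOL-Analysis.Analysis"
begin

text \<open>State space R^n is modelled as real^('m + 'k) (n = m + k, k >= 1, so n > m >= 1);
  the first m coordinates are the indices Inl i. A policy is a pair (F, G) with
  F :: real^'n^'n and G :: real^('m + unit)^'n (an n x (m+1) matrix), a Euclidean vector
  with the componentwise (Frobenius) inner product.\<close>

definition aug :: "real^'m::finite \<Rightarrow> real^('m + unit)" where
  "aug v = (\<chi> j. case j of Inl i \<Rightarrow> v $ i | Inr _ \<Rightarrow> 1)"

definition sigv :: "(real \<Rightarrow> real) \<Rightarrow> real^'n::finite \<Rightarrow> real^'n" where
  "sigv \<sigma> v = (\<chi> j. \<sigma> (v $ j))"

definition Hproj :: "real^('m::finite + 'k::finite) \<Rightarrow> real^'m" where
  "Hproj u = (\<chi> i. u $ Inl i)"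

text \<open>S_pi U; a state is a sequence t \<mapsto> u_t of which only t = 0..T matters
  (entries beyond T are normalised to 0).\<close>
definition Sop :: "(real \<Rightarrow> real) \<Rightarrow> (nat \<Rightarrow> real^'m) \<Rightarrow> nat
    \<Rightarrow> (real^'n^'n) \<times> (real^('m + unit)^'n) \<Rightarrow> (nat \<Rightarrow> real^'n) \<Rightarrow> (nat \<Rightarrow> real^'n)" where
  "Sop \<sigma> x T \<pi> U = (\<lambda>t. if t = 0 \<or> T < t then 0
      else sigv \<sigma> (fst \<pi> *v U (t - 1) + snd \<pi> *v aug (x (t - 1))))"

fun traj :: "(real \<Rightarrow> real) \<Rightarrow> (nat \<Rightarrow> real^'m) \<Rightarrow> nat
    \<Rightarrow> (real^'n^'n) \<times> (real^('m + unit)^'n) \<Rightarrow> nat \<Rightarrow> real^'n" where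
  "traj \<sigma> x T \<pi> 0 = 0"
| "traj \<sigma> x T \<pi> (Suc t) = (if Suc t \<le> T then
      sigv \<sigma> (fst \<pi> *v traj \<sigma> x T \<pi> t + snd \<pi> *v aug (x t)) else 0)"

definition cost :: "(nat \<Rightarrow> real^'m::finite) \<Rightarrow> nat \<Rightarrow> (nat \<Rightarrow> real^('m + 'k::finite)) \<Rightarrow> real" where
  "cost x T U = (\<Sum>t = 1..T. (norm (Hproj (U t) - x t))\<^sup>2)"

definition Jc :: "(real \<Rightarrow> real) \<Rightarrow> (nat \<Rightarrow> real^'m::finite) \<Rightarrow> nat \<Rightarrow> real
    \<Rightarrow> (real^('m + 'k::finite)^('m + 'k)) \<times> (real^('m + unit)^('m + 'k))
    \<Rightarrow> (nat \<Rightarrow> real^('m + 'k::finite)) \<Rightarrow> real" where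
  "Jc \<sigma> x T \<gamma> \<pi> U = (\<Sum>k. \<gamma> ^ k * cost x T ((Sop \<sigma> x T \<pi> ^^ k) U))"

end

theory Submission
  imports Defs
begin

definition DS :: "(real \<Rightarrow> real) \<Rightarrow> (nat \<Rightarrow> real^'m::finite) \<Rightarrow> nat
    \<Rightarrow> (real^'n::finite^'n) \<times> (real^('m + unit)^'n) \<Rightarrow> (real^'n^'n) \<times> (real^('m + unit)^'n)
    \<Rightarrow> (nat \<Rightarrow> real^'n) \<Rightarrow> (nat \<Rightarrow> real^'n) \<Rightarrow> (nat \<Rightarrow> real^'n)" where
  "DS \<sigma>' x T p0 p1 W0 W' = (\<lambda>t. if t = 0 \<or> T < t then 0 else
     (\<chi> j. \<sigma>' ((fst p0 *v W0 (t - 1) + snd p0 *v aug (x (t - 1))) $ j) *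
        ((fst p1 *v W0 (t - 1) + fst p0 *v W' (t - 1) + snd p1 *v aug (x (t - 1))) $ j)))"

lemma Sop_deriv:
  fixes \<sigma> \<sigma>' :: "real \<Rightarrow> real" and x :: "nat \<Rightarrow> real^'m::finite"
    and p0 p1 :: "(real^'n::finite^'n) \<times> (real^('m + unit)^'n)"
    and W :: "real \<Rightarrow> nat \<Rightarrow> real^'n"
  assumes sd: "\<And>y. (\<sigma> has_real_derivative \<sigma>' y) (at y)"
    and W: "\<And>t j. ((\<lambda>a. W a t $ j) has_real_derivative (W' t $ j)) (at 0)"
  shows "((\<lambda>a. Sop \<sigma> x T (p0 + a *\<^sub>R p1) (W a) t $ j) has_real_derivative
           DS \<sigma>' x T p0 p1 (W 0) W' t $ j) (at 0)"
proof (cases "t = 0 \<or> T < t")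
  case True
  then show ?thesis by (simp add: Sop_def DS_def)
next
  case False
  let ?z = "\<lambda>a. (fst (p0 + a *\<^sub>R p1) *v W a (t - 1) + snd (p0 + a *\<^sub>R p1) *v aug (x (t - 1))) $ j"
  have ez: "?z a = (\<Sum>l\<in>UNIV. (fst p0 $ j $ l + a * fst p1 $ j $ l) * W a (t - 1) $ l)
       + (\<Sum>l\<in>UNIV. (snd p0 $ j $ l + a * snd p1 $ j $ l) * aug (x (t - 1)) $ l)" for a
    by (simp add: matrix_vector_mult_def)
  have d1: "((\<lambda>a. (\<Sum>l\<in>UNIV. (fst p0 $ j $ l + a * fst p1 $ j $ l) * W a (t - 1) $ l))
      has_real_derivative (\<Sum>l\<in>UNIV. fst p1 $ j $ l * W 0 (t - 1) $ l + fst p0 $ j $ l * W' (t - 1) $ l)) (at 0)"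
  proof (rule DERIV_sum)
    fix l :: 'n
    have e: "((\<lambda>a. fst p0 $ j $ l + a * fst p1 $ j $ l) has_real_derivative fst p1 $ j $ l) (at 0)"
      using DERIV_add[OF DERIV_const[of "fst p0 $ j $ l"] DERIV_cmult_right[OF DERIV_ident, of "fst p1 $ j $ l"]] by simp
    have "((\<lambda>a. (fst p0 $ j $ l + a * fst p1 $ j $ l) * W a (t - 1) $ l) has_real_derivative
       fst p1 $ j $ l * W 0 (t - 1) $ l + W' (t - 1) $ l * (fst p0 $ j $ l + 0 * fst p1 $ j $ l)) (at 0)"
      by (rule DERIV_mult[OF e W])
    then show "((\<lambda>a. (fst p0 $ j $ l + a * fst p1 $ j $ l) * W a (t - 1) $ l) has_real_derivative
       fst p1 $ j $ l * W 0 (t - 1) $ l + fst p0 $ j $ l * W' (t - 1) $ l) (at 0)" by (simp add: mult.commute)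
  qed
  have d2: "((\<lambda>a. (\<Sum>l\<in>UNIV. (snd p0 $ j $ l + a * snd p1 $ j $ l) * aug (x (t - 1)) $ l))
      has_real_derivative (\<Sum>l\<in>UNIV. snd p1 $ j $ l * aug (x (t - 1)) $ l)) (at 0)"
  proof (rule DERIV_sum)
    fix l :: "'m + unit"
    have "((\<lambda>a. (snd p0 $ j $ l + a * snd p1 $ j $ l) * aug (x (t - 1)) $ l) has_real_derivative
       snd p1 $ j $ l * aug (x (t - 1)) $ l) (at 0)"
      using DERIV_cmult[OF DERIV_add[OF DERIV_const[of "snd p0 $ j $ l"] DERIV_cmult_right[OF DERIV_ident, of "snd p1 $ j $ l"]], of "aug (x (t - 1)) $ l"]
      by (simp add: mult.commute)
    then show "((\<lambda>a. (snd p0 $ j $ l + a * snd p1 $ j $ l) * aug (x (t - 1)) $ l) has_real_derivative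
       snd p1 $ j $ l * aug (x (t - 1)) $ l) (at 0)" by simp
  qed
  have dz: "(?z has_real_derivative
     (fst p1 *v W 0 (t - 1) + fst p0 *v W' (t - 1) + snd p1 *v aug (x (t - 1))) $ j) (at 0)"
    unfolding ez using DERIV_add[OF d1 d2]
    by (simp add: matrix_vector_mult_def sum.distrib)
  have "((\<lambda>a. \<sigma> (?z a)) has_real_derivative \<sigma>' (?z 0) *
     (fst p1 *v W 0 (t - 1) + fst p0 *v W' (t - 1) + snd p1 *v aug (x (t - 1))) $ j) (at 0)"
    by (rule DERIV_chain2[OF sd dz])
  then show ?thesis using False by (simp add: Sop_def DS_def sigv_def)
qed


lemma traj_zero: "T < t \<Longrightarrow> traj \<sigma> x T \<pi> t = 0"
  by (cases t) auto

lemma Sop_fix: "Sop \<sigma> x T \<pi> (traj \<sigma> x T \<pi>) = traj \<sigma> x T \<pi>"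
proof
  fix t show "Sop \<sigma> x T \<pi> (traj \<sigma> x T \<pi>) t = traj \<sigma> x T \<pi> t"
    by (cases t) (auto simp: Sop_def)
qed

lemma Sop_pow_fix: "(Sop \<sigma> x T \<pi> ^^ k) (traj \<sigma> x T \<pi>) = traj \<sigma> x T \<pi>"
  by (induction k) (simp_all add: Sop_fix)

lemma Sop_step_traj: "0 < t \<Longrightarrow> t \<le> T \<Longrightarrow> W (t - 1) = traj \<sigma> x T \<pi> (t - 1) \<Longrightarrow> Sop \<sigma> x T \<pi> W t = traj \<sigma> x T \<pi> t"
  by (cases t) (auto simp: Sop_def)

lemma Sop_pow_traj_aux: "t \<le> k \<Longrightarrow> (Sop \<sigma> x T \<pi> ^^ Suc k) V t = traj \<sigma> x T \<pi> t"
proof (induction k arbitrary: t)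
  case 0
  then show ?case by (simp add: Sop_def)
next
  case (Suc k)
  show ?case
  proof (cases "t = 0 \<or> T < t")
    case True
    then show ?thesis by (auto simp: Sop_def traj_zero)
  next
    case False
    then obtain s where s: "t = Suc s" "s \<le> k" "Suc s \<le> T" using Suc.prems by (cases t) auto
    have "(Sop \<sigma> x T \<pi> ^^ Suc (Suc k)) V = Sop \<sigma> x T \<pi> ((Sop \<sigma> x T \<pi> ^^ Suc k) V)"
      by (simp only: funpow.simps comp_def)
    then show ?thesis apply (simp only:) apply (rule Sop_step_traj) using s Suc.IH[of s] by auto
  qed
qed

lemma Sop_pow_traj: "T \<le> k \<Longrightarrow> (Sop \<sigma> x T \<pi> ^^ Suc k) V = traj \<sigma> x T \<pi>"
proof
  fix t assume "T \<le> k"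
  show "(Sop \<sigma> x T \<pi> ^^ Suc k) V t = traj \<sigma> x T \<pi> t"
  proof (cases "t \<le> k")
    case True then show ?thesis by (rule Sop_pow_traj_aux)
  next
    case False
    then have "T < t" using \<open>T \<le> k\<close> by simp
    then show ?thesis by (simp add: Sop_def traj_zero)
  qed
qed

lemma Jc_formula:
  assumes g0: "0 < \<gamma>" and g1: "\<gamma> < 1"
  shows "Jc \<sigma> x T \<gamma> \<pi> V = (\<Sum>k<Suc T. \<gamma> ^ k * cost x T ((Sop \<sigma> x T \<pi> ^^ k) V))
     + \<gamma> ^ Suc T / (1 - \<gamma>) * cost x T ((Sop \<sigma> x T \<pi> ^^ Suc T) V)"
proof -
  define f where "f k = \<gamma> ^ k * cost x T ((Sop \<sigma> x T \<pi> ^^ k) V)" for k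
  define C where "C = cost x T ((Sop \<sigma> x T \<pi> ^^ Suc T) V)"
  have sh: "f (n + Suc T) = (\<gamma> ^ Suc T * C) * \<gamma> ^ n" for n
  proof -
    have "(Sop \<sigma> x T \<pi> ^^ (n + Suc T)) V = (Sop \<sigma> x T \<pi> ^^ Suc T) V"
      by (metis add_Suc_right Sop_pow_traj le_add2 order_refl)
    then show ?thesis by (simp add: f_def C_def power_add)
  qed
  have gs: "(\<lambda>n. \<gamma> ^ n) sums (1 / (1 - \<gamma>))" using geometric_sums[of \<gamma>] g0 g1 by simp
  have ss: "(\<lambda>n. f (n + Suc T)) sums ((\<gamma> ^ Suc T * C) * (1 / (1 - \<gamma>)))"
    unfolding sh by (rule sums_mult[OF gs])
  have sf: "summable f" using ss summable_iff_shift[of f "Suc T"] by (auto simp: sums_iff)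
  have "suminf f = (\<Sum>n. f (n + Suc T)) + (\<Sum>i<Suc T. f i)"
    by (rule suminf_split_initial_segment[OF sf])
  also have "\<dots> = (\<gamma> ^ Suc T * C) * (1 / (1 - \<gamma>)) + (\<Sum>i<Suc T. f i)" using ss by (simp add: sums_iff)
  finally have "suminf f = (\<gamma> ^ Suc T * C) * (1 / (1 - \<gamma>)) + (\<Sum>i<Suc T. f i)" .
  moreover have "Jc \<sigma> x T \<gamma> \<pi> V = suminf f" unfolding Jc_def f_def ..
  ultimately show ?thesis unfolding f_def C_def by (simp del: funpow.simps sum.lessThan_Suc)
qed

definition Dc :: "(nat \<Rightarrow> real^'m::finite) \<Rightarrow> nat \<Rightarrow> (nat \<Rightarrow> real^('m + 'k::finite)) \<Rightarrow> (nat \<Rightarrow> real^('m + 'k)) \<Rightarrow> real" where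
  "Dc x T W0 W' = (\<Sum>t = 1..T. \<Sum>i\<in>UNIV. 2 * (W0 t $ Inl i - x t $ i) * W' t $ Inl i)"

lemma cost_expand: "cost x T W = (\<Sum>t = 1..T. \<Sum>i\<in>UNIV. (W t $ Inl i - x t $ i)\<^sup>2)"
  unfolding cost_def power2_norm_eq_inner
  by (simp add: inner_vec_def Hproj_def power2_eq_square)

lemma cost_deriv:
  fixes W :: "real \<Rightarrow> nat \<Rightarrow> real^('m::finite + 'k::finite)"
  assumes W: "\<And>t j. ((\<lambda>a. W a t $ j) has_real_derivative (W' t $ j)) (at 0)"
  shows "((\<lambda>a. cost x T (W a)) has_real_derivative Dc x T (W 0) W') (at 0)"
  unfolding cost_expand Dc_def
proof (intro DERIV_sum)
  fix t i
  show "((\<lambda>a. (W a t $ Inl i - x t $ i)\<^sup>2) has_real_derivative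
     2 * (W 0 t $ Inl i - x t $ i) * W' t $ Inl i) (at 0)"
    by (rule DERIV_cong[OF DERIV_power[OF DERIV_diff[OF W DERIV_const]]]) simp
qed


fun Vd where
  "Vd \<sigma>' x T p0 p1 U0 0 = DS \<sigma>' x T p0 p1 U0 (\<lambda>t. 0)"
| "Vd \<sigma>' x T p0 p1 U0 (Suc k) = DS \<sigma>' x T p0 0 U0 (Vd \<sigma>' x T p0 p1 U0 k)"

fun Wd where
  "Wd \<sigma>' x T p0 p1 U0 0 = (\<lambda>t. 0)"
| "Wd \<sigma>' x T p0 p1 U0 (Suc k) = DS \<sigma>' x T p0 p1 U0 (Wd \<sigma>' x T p0 p1 U0 k)"

lemma DS_split: "DS \<sigma>' x T p0 p1 U0 W' = (\<lambda>t. DS \<sigma>' x T p0 p1 U0 (\<lambda>t. 0) t + DS \<sigma>' x T p0 0 U0 W' t)"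
  by (rule ext) (simp add: DS_def vec_eq_iff algebra_simps)

lemma DS_add: "DS \<sigma>' x T p0 0 U0 (\<lambda>t. A t + B t) = (\<lambda>t. DS \<sigma>' x T p0 0 U0 A t + DS \<sigma>' x T p0 0 U0 B t)"
  by (rule ext) (simp add: DS_def vec_eq_iff algebra_simps matrix_vector_right_distrib)

lemma DS_zero: "DS \<sigma>' x T p0 0 U0 (\<lambda>t. 0) = (\<lambda>t. 0)"
  by (rule ext) (simp add: DS_def vec_eq_iff)

lemma DS_sum: "DS \<sigma>' x T p0 0 U0 (\<lambda>t. \<Sum>j<(k::nat). f j t) = (\<lambda>t. \<Sum>j<k. DS \<sigma>' x T p0 0 U0 (f j) t)"
proof (induction k)
  case 0 then show ?case by (simp add: DS_zero)
next
  case (Suc k)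
  have "DS \<sigma>' x T p0 0 U0 (\<lambda>t. \<Sum>j<Suc k. f j t) = DS \<sigma>' x T p0 0 U0 (\<lambda>t. (\<Sum>j<k. f j t) + f k t)"
    by simp
  also have "\<dots> = (\<lambda>t. DS \<sigma>' x T p0 0 U0 (\<lambda>t. \<Sum>j<k. f j t) t + DS \<sigma>' x T p0 0 U0 (f k) t)"
    by (rule DS_add)
  finally show ?case using Suc.IH by simp
qed

lemma Wd_sum: "Wd \<sigma>' x T p0 p1 U0 k = (\<lambda>t. \<Sum>j<k. Vd \<sigma>' x T p0 p1 U0 j t)"
proof (induction k)
  case 0 then show ?case by simp
next
  case (Suc k)
  have "Wd \<sigma>' x T p0 p1 U0 (Suc k) = (\<lambda>t. DS \<sigma>' x T p0 p1 U0 (\<lambda>t. 0) t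
      + DS \<sigma>' x T p0 0 U0 (\<lambda>t. \<Sum>j<k. Vd \<sigma>' x T p0 p1 U0 j t) t)"
    using Suc.IH DS_split by (metis Wd.simps(2))
  also have "\<dots> = (\<lambda>t. Vd \<sigma>' x T p0 p1 U0 0 t + (\<Sum>j<k. Vd \<sigma>' x T p0 p1 U0 (Suc j) t))"
    by (simp add: DS_sum)
  also have "\<dots> = (\<lambda>t. \<Sum>j<Suc k. Vd \<sigma>' x T p0 p1 U0 j t)"
    by (simp add: sum.lessThan_Suc_shift del: sum.lessThan_Suc)
  finally show ?case .
qed

lemma Vd_zero: "t \<le> k \<or> T < t \<Longrightarrow> Vd \<sigma>' x T p0 p1 U0 k t = 0"
proof (induction k arbitrary: t)
  case 0 then show ?case by (auto simp: DS_def)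
next
  case (Suc k)
  show ?case
  proof (cases "t = 0 \<or> T < t")
    case True then show ?thesis by (auto simp: DS_def)
  next
    case False
    then have "Vd \<sigma>' x T p0 p1 U0 k (t - 1) = 0" using Suc by (intro Suc.IH) auto
    then show ?thesis by (simp add: DS_def vec_eq_iff[of "\<chi> j. 0"])
  qed
qed

lemma Dc_sum: "Dc x T U0 (\<lambda>t. \<Sum>j<(k::nat). f j t) = (\<Sum>j<k. Dc x T U0 (f j))"
  unfolding Dc_def
  by (simp add: sum_component sum_distrib_left sum.swap[of _ "{..<k}"] sum.swap[of _ "{..<k}" UNIV])

lemma Dc_zero: "Dc x T U0 (\<lambda>t. 0) = 0"
  by (simp add: Dc_def)

lemma sum_identity:
  fixes \<gamma> :: real and d :: "nat \<Rightarrow> real"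
  assumes "\<gamma> < 1"
  shows "(\<Sum>k<N. \<gamma> ^ k * (\<Sum>j<k. d j)) + \<gamma> ^ N / (1 - \<gamma>) * (\<Sum>j<N. d j)
    = \<gamma> / (1 - \<gamma>) * (\<Sum>j<N. \<gamma> ^ j * d j)"
proof (induction N)
  case 0 then show ?case by simp
next
  case (Suc N)
  have ne: "1 - \<gamma> \<noteq> 0" using assms by simp
  let ?S = "\<Sum>j<N. d j"
  have "(\<Sum>k<Suc N. \<gamma> ^ k * (\<Sum>j<k. d j)) + \<gamma> ^ Suc N / (1 - \<gamma>) * (\<Sum>j<Suc N. d j)
      = ((\<Sum>k<N. \<gamma> ^ k * (\<Sum>j<k. d j)) + \<gamma> ^ N / (1 - \<gamma>) * ?S)
        + (\<gamma> ^ N * ?S + \<gamma> ^ Suc N / (1 - \<gamma>) * (?S + d N) - \<gamma> ^ N / (1 - \<gamma>) * ?S)"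
    by simp
  also have "\<gamma> ^ N * ?S + \<gamma> ^ Suc N / (1 - \<gamma>) * (?S + d N) - \<gamma> ^ N / (1 - \<gamma>) * ?S
      = \<gamma> / (1 - \<gamma>) * (\<gamma> ^ N * d N)"
    using ne by (simp add: divide_simps) (simp add: algebra_simps)
  finally show ?case using Suc.IH by (simp add: distrib_left)
qed


lemma W_deriv:
  fixes \<sigma> \<sigma>' :: "real \<Rightarrow> real" and x :: "nat \<Rightarrow> real^'m::finite"
    and \<pi>i \<Delta> :: "(real^'n::finite^'n) \<times> (real^('m + unit)^'n)"
  assumes sd: "\<And>y. (\<sigma> has_real_derivative \<sigma>' y) (at y)"
  shows "((\<lambda>a. (Sop \<sigma> x T (\<pi>i + a *\<^sub>R \<Delta>) ^^ k) (traj \<sigma> x T \<pi>i) t $ j) has_real_derivative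
     Wd \<sigma>' x T \<pi>i \<Delta> (traj \<sigma> x T \<pi>i) k t $ j) (at 0)"
proof (induction k arbitrary: t j)
  case 0 then show ?case by simp
next
  case (Suc k)
  have e: "(Sop \<sigma> x T (\<pi>i + 0 *\<^sub>R \<Delta>) ^^ k) (traj \<sigma> x T \<pi>i) = traj \<sigma> x T \<pi>i"
    by (simp add: Sop_pow_fix)
  have "((\<lambda>a. Sop \<sigma> x T (\<pi>i + a *\<^sub>R \<Delta>) ((Sop \<sigma> x T (\<pi>i + a *\<^sub>R \<Delta>) ^^ k) (traj \<sigma> x T \<pi>i)) t $ j) has_real_derivative
     DS \<sigma>' x T \<pi>i \<Delta> ((Sop \<sigma> x T (\<pi>i + 0 *\<^sub>R \<Delta>) ^^ k) (traj \<sigma> x T \<pi>i)) (Wd \<sigma>' x T \<pi>i \<Delta> (traj \<sigma> x T \<pi>i) k) t $ j) (at 0)"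
    by (rule Sop_deriv[OF sd Suc.IH])
  then show ?case unfolding e by simp
qed

lemma V_deriv:
  fixes \<sigma> \<sigma>' :: "real \<Rightarrow> real" and x :: "nat \<Rightarrow> real^'m::finite"
    and \<pi>i \<Delta> :: "(real^'n::finite^'n) \<times> (real^('m + unit)^'n)"
  assumes sd: "\<And>y. (\<sigma> has_real_derivative \<sigma>' y) (at y)"
  shows "((\<lambda>a. (Sop \<sigma> x T \<pi>i ^^ k) (Sop \<sigma> x T (\<pi>i + a *\<^sub>R \<Delta>) (traj \<sigma> x T \<pi>i)) t $ j) has_real_derivative
     Vd \<sigma>' x T \<pi>i \<Delta> (traj \<sigma> x T \<pi>i) k t $ j) (at 0)"
proof (induction k arbitrary: t j)
  case 0
  have c: "((\<lambda>a. traj \<sigma> x T \<pi>i t $ j) has_real_derivative (\<lambda>t. 0::real^'n) t $ j) (at 0)" for t j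
    by simp
  have "((\<lambda>a. Sop \<sigma> x T (\<pi>i + a *\<^sub>R \<Delta>) (traj \<sigma> x T \<pi>i) t $ j) has_real_derivative
     DS \<sigma>' x T \<pi>i \<Delta> (traj \<sigma> x T \<pi>i) (\<lambda>t. 0) t $ j) (at 0)"
    by (rule Sop_deriv[OF sd c])
  then show ?case by simp
next
  case (Suc k)
  have e: "(Sop \<sigma> x T \<pi>i ^^ k) (Sop \<sigma> x T (\<pi>i + 0 *\<^sub>R \<Delta>) (traj \<sigma> x T \<pi>i)) = traj \<sigma> x T \<pi>i"
    by (simp add: Sop_pow_fix Sop_fix)
  have "((\<lambda>a. Sop \<sigma> x T (\<pi>i + a *\<^sub>R 0) ((Sop \<sigma> x T \<pi>i ^^ k) (Sop \<sigma> x T (\<pi>i + a *\<^sub>R \<Delta>) (traj \<sigma> x T \<pi>i))) t $ j) has_real_derivative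
     DS \<sigma>' x T \<pi>i 0 ((Sop \<sigma> x T \<pi>i ^^ k) (Sop \<sigma> x T (\<pi>i + 0 *\<^sub>R \<Delta>) (traj \<sigma> x T \<pi>i))) (Vd \<sigma>' x T \<pi>i \<Delta> (traj \<sigma> x T \<pi>i) k) t $ j) (at 0)"
    by (rule Sop_deriv[OF sd Suc.IH])
  then show ?case unfolding e by simp
qed


theorem lemma2:
  fixes \<sigma> :: "real \<Rightarrow> real" and x :: "nat \<Rightarrow> real^'m::finite" and T :: nat and \<gamma> :: real
    and \<pi>i g \<Delta>\<pi> :: "(real^('m + 'k::finite)^('m + 'k)) \<times> (real^('m + unit)^('m + 'k))"
  assumes "T \<ge> 1" and "0 < \<gamma>" and "\<gamma> < 1"
    and "\<forall>y. \<sigma> y \<in> {-1..1}" and "\<sigma> C1_differentiable_on UNIV"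
    and "GDERIV (\<lambda>\<pi>. cost x T (traj \<sigma> x T \<pi>i)
                 + \<gamma> * Jc \<sigma> x T \<gamma> \<pi>i (Sop \<sigma> x T \<pi> (traj \<sigma> x T \<pi>i))) \<pi>i :> g"
    and "\<Delta>\<pi> = - g"
    and "\<Delta>\<pi> \<noteq> 0"
  shows "\<exists>\<alpha>0>0. \<forall>\<alpha>. 0 < \<alpha> \<and> \<alpha> \<le> \<alpha>0 \<longrightarrow>
           Jc \<sigma> x T \<gamma> (\<pi>i + \<alpha> *\<^sub>R \<Delta>\<pi>) (traj \<sigma> x T \<pi>i) < Jc \<sigma> x T \<gamma> \<pi>i (traj \<sigma> x T \<pi>i)"
proof -
  note g0 = assms(2) and g1 = assms(3)
  define \<sigma>' where "\<sigma>' = deriv \<sigma>"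
  have "\<forall>y\<in>UNIV. \<sigma> differentiable at y" using assms(5) C1_differentiable_on_eq by blast
  then have sd: "\<And>y. (\<sigma> has_real_derivative \<sigma>' y) (at y)"
    unfolding \<sigma>'_def using DERIV_deriv_iff_real_differentiable by blast
  define U where "U = traj \<sigma> x T \<pi>i"
  define N where "N = Suc T"
  define Wf where "Wf k a = (Sop \<sigma> x T (\<pi>i + a *\<^sub>R \<Delta>\<pi>) ^^ k) U" for k a
  define Vf where "Vf k a = (Sop \<sigma> x T \<pi>i ^^ k) (Sop \<sigma> x T (\<pi>i + a *\<^sub>R \<Delta>\<pi>) U)" for k a
  define d where "d j = Dc x T U (Vd \<sigma>' x T \<pi>i \<Delta>\<pi> U j)" for j
  define \<phi> where "\<phi> a = Jc \<sigma> x T \<gamma> (\<pi>i + a *\<^sub>R \<Delta>\<pi>) U" for a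
  define \<psi> where "\<psi> a = cost x T U + \<gamma> * Jc \<sigma> x T \<gamma> \<pi>i (Sop \<sigma> x T (\<pi>i + a *\<^sub>R \<Delta>\<pi>) U)" for a
  have Wf0: "Wf k 0 = U" for k by (simp add: Wf_def U_def Sop_pow_fix)
  have Vf0: "Vf k 0 = U" for k by (simp add: Vf_def U_def Sop_pow_fix Sop_fix)
  have cW: "((\<lambda>a. cost x T (Wf k a)) has_real_derivative Dc x T U (Wd \<sigma>' x T \<pi>i \<Delta>\<pi> U k)) (at 0)" for k
  proof -
    have "((\<lambda>a. Wf k a t $ j) has_real_derivative Wd \<sigma>' x T \<pi>i \<Delta>\<pi> U k t $ j) (at 0)" for t j
      unfolding Wf_def U_def by (rule W_deriv[OF sd])
    from cost_deriv[OF this] show ?thesis unfolding Wf0 .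
  qed
  have cV: "((\<lambda>a. cost x T (Vf k a)) has_real_derivative d k) (at 0)" for k
  proof -
    have "((\<lambda>a. Vf k a t $ j) has_real_derivative Vd \<sigma>' x T \<pi>i \<Delta>\<pi> U k t $ j) (at 0)" for t j
      unfolding Vf_def U_def by (rule V_deriv[OF sd])
    from cost_deriv[OF this] show ?thesis unfolding Vf0 d_def .
  qed
  have dW: "Dc x T U (Wd \<sigma>' x T \<pi>i \<Delta>\<pi> U k) = (\<Sum>j<k. d j)" for k
    unfolding Wd_sum Dc_sum d_def ..
  have dN: "d N = 0"
  proof -
    have "Vd \<sigma>' x T \<pi>i \<Delta>\<pi> U N = (\<lambda>t. 0)"
      by (rule ext, rule Vd_zero) (auto simp: N_def)
    then show ?thesis by (simp add: d_def Dc_zero)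
  qed
  have \<phi>eq: "\<phi> = (\<lambda>a. (\<Sum>k<N. \<gamma> ^ k * cost x T (Wf k a)) + \<gamma> ^ N / (1 - \<gamma>) * cost x T (Wf N a))"
    by (rule ext) (simp only: \<phi>_def Wf_def N_def Jc_formula[OF g0 g1])
  have \<psi>eq: "\<psi> = (\<lambda>a. cost x T U + \<gamma> * ((\<Sum>k<N. \<gamma> ^ k * cost x T (Vf k a)) + \<gamma> ^ N / (1 - \<gamma>) * cost x T (Vf N a)))"
    by (rule ext) (simp only: \<psi>_def Vf_def N_def Jc_formula[OF g0 g1])
  define D\<phi> where "D\<phi> = (\<Sum>k<N. \<gamma> ^ k * (\<Sum>j<k. d j)) + \<gamma> ^ N / (1 - \<gamma>) * (\<Sum>j<N. d j)"
  define D\<psi> where "D\<psi> = \<gamma> * ((\<Sum>k<N. \<gamma> ^ k * d k) + \<gamma> ^ N / (1 - \<gamma>) * d N)"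
  have d\<phi>: "(\<phi> has_real_derivative D\<phi>) (at 0)"
    unfolding \<phi>eq D\<phi>_def dW[symmetric]
    by (intro DERIV_add DERIV_sum DERIV_cmult cW)
  have d\<psi>: "(\<psi> has_real_derivative D\<psi>) (at 0)"
  proof -
    have "((\<lambda>a. cost x T U + \<gamma> * ((\<Sum>k<N. \<gamma> ^ k * cost x T (Vf k a)) + \<gamma> ^ N / (1 - \<gamma>) * cost x T (Vf N a)))
      has_real_derivative 0 + \<gamma> * ((\<Sum>k<N. \<gamma> ^ k * d k) + \<gamma> ^ N / (1 - \<gamma>) * d N)) (at 0)"
      by (intro DERIV_add DERIV_const DERIV_cmult DERIV_sum cV)
    then show ?thesis unfolding \<psi>eq D\<psi>_def by simp
  qed
  have rel: "D\<phi> = D\<psi> / (1 - \<gamma>)"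
    unfolding D\<phi>_def D\<psi>_def sum_identity[OF g1] dN using g1 by simp
  have L: "((\<lambda>a. \<pi>i + a *\<^sub>R \<Delta>\<pi>) has_derivative (\<lambda>a. a *\<^sub>R \<Delta>\<pi>)) (at 0)"
    by (auto intro!: derivative_eq_intros)
  have G: "((\<lambda>\<pi>. cost x T (traj \<sigma> x T \<pi>i)
                 + \<gamma> * Jc \<sigma> x T \<gamma> \<pi>i (Sop \<sigma> x T \<pi> (traj \<sigma> x T \<pi>i))) has_derivative (\<lambda>h. inner h g)) (at (\<pi>i + 0 *\<^sub>R \<Delta>\<pi>))"
    using assms(6) by (simp add: gderiv_def)
  have "(\<psi> has_derivative (\<lambda>a. inner (a *\<^sub>R \<Delta>\<pi>) g)) (at 0)"
    using has_derivative_compose[OF L G] unfolding \<psi>_def U_def .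
  then have "(\<psi> has_real_derivative inner \<Delta>\<pi> g) (at 0)"
    by (rule has_derivative_imp_has_field_derivative) simp
  then have "D\<psi> = inner \<Delta>\<pi> g" using d\<psi> DERIV_unique by blast
  also have "\<dots> < 0" using assms(7,8) by simp
  finally have "D\<phi> < 0" using rel g1 by (simp add: divide_neg_pos)
  then obtain e where e: "e > 0" "\<And>h. h > 0 \<Longrightarrow> h < e \<Longrightarrow> \<phi> 0 > \<phi> (0 + h)"
    using DERIV_neg_dec_right[OF d\<phi>] by blast
  show ?thesis
  proof (intro exI[of _ "e / 2"] conjI allI impI)
    show "e / 2 > 0" using e by simp
    fix \<alpha> assume "0 < \<alpha> \<and> \<alpha> \<le> e / 2"
    then have "\<phi> 0 > \<phi> \<alpha>" using e(1) e(2)[of \<alpha>] by simp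
    then show "Jc \<sigma> x T \<gamma> (\<pi>i + \<alpha> *\<^sub>R \<Delta>\<pi>) (traj \<sigma> x T \<pi>i) < Jc \<sigma> x T \<gamma> \<pi>i (traj \<sigma> x T \<pi>i)"
      by (simp add: \<phi>_def U_def)
  qed
qed

end
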